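(* Consider the algebra of Laurent polynomials in nonzero variables $a,b,c,d,e,f,g,h$ with the log-canonical Poisson bracket determined by $\{a,b\}=\tfrac12 ab,\ \{a,c\}=0,\ \{a,d\}=-\tfrac14 ad,\ \{a,e\}=\tfrac14 ae,\ \{a,f\}=\tfrac14 af,\ \{a,g\}=-\tfrac14 ag,\ \{a,h\}=\tfrac14 ah,$ $\{b,c\}=0,\ \{b,d\}=-\tfrac14 bd,\ \{b,e\}=\tfrac14 be,\ \{b,f\}=-\tfrac14 bf,\ \{b,g\}=-\tfrac14 bg,\ \{b,h\}=\tfrac14 bh,$ $\{c,d\}=-\tfrac12 cd,\ \{c,e\}=\tfrac12 ce,\ \{c,f\}=\{c,g\}=\{c,h\}=0,$ $\{d,e\}=0,\ \{d,f\}=\tfrac14 df,\ \{d,g\}=\{d,h\}=0,$ $\{e,f\}=-\tfrac14 ef,\ \{e,g\}=\{e,h\}=0,\ \{f,g\}=\tfrac14 fg,\ \{f,h\}=-\tfrac14 fh,\ \{h,g\}=0$. Then $de$ and $hg$ are Casimir elements and the symplectic leaves are $6$-dimensional.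
   Context: A log-canonical bracket is extended from the generators to all Laurent polynomials by bilinearity, antisymmetry and the Leibniz rule. (These are the $\lambda$-lengths of a complete system of arcs on a Riemann sphere with two holes, each with two bordered cusps — the $PIII^{D_6}$ case.) *)

theory Defs
  imports "HOL-Analysis.Analysis"
begin

text \<open>Coordinates a,b,c,d,e,f,g,h are the components 0,...,7 of a vector in real^8.\<close>

definition torus :: "real^8 \<Rightarrow> bool" where
  "torus x \<longleftrightarrow> (\<forall>i. x $ i \<noteq> 0)"

definition lmono :: "int^8 \<Rightarrow> real^8 \<Rightarrow> real" where
  "lmono m x = (\<Prod>i\<in>UNIV. x $ i powi (m $ i))"

definition laurent :: "(real^8 \<Rightarrow> real) \<Rightarrow> bool" where
  "laurent F \<longleftrightarrow> (\<exists>S c. finite S \<and> (\<forall>x. torus x \<longrightarrow> F x = (\<Sum>m\<in>S. c m * lmono m x)))"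

text \<open>Upper-triangular coefficients of the log-canonical bracket {x_i,x_j} = omega i j x_i x_j.\<close>
definition wup :: "8 \<Rightarrow> 8 \<Rightarrow> real" where
  "wup i j =
    (if i = 0 \<and> j = 1 then 1/2
     else if i = 0 \<and> j = 3 then -1/4
     else if i = 0 \<and> j = 4 then 1/4
     else if i = 0 \<and> j = 5 then 1/4
     else if i = 0 \<and> j = 6 then -1/4
     else if i = 0 \<and> j = 7 then 1/4
     else if i = 1 \<and> j = 3 then -1/4
     else if i = 1 \<and> j = 4 then 1/4
     else if i = 1 \<and> j = 5 then -1/4
     else if i = 1 \<and> j = 6 then -1/4
     else if i = 1 \<and> j = 7 then 1/4
     else if i = 2 \<and> j = 3 then -1/2
     else if i = 2 \<and> j = 4 then 1/2
     else if i = 3 \<and> j = 5 then 1/4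
     else if i = 4 \<and> j = 5 then -1/4
     else if i = 5 \<and> j = 6 then 1/4
     else if i = 5 \<and> j = 7 then -1/4
     else 0)"

definition omega :: "8 \<Rightarrow> 8 \<Rightarrow> real" where
  "omega i j = wup i j - wup j i"

definition pd :: "8 \<Rightarrow> (real^8 \<Rightarrow> real) \<Rightarrow> real^8 \<Rightarrow> real" where
  "pd i F x = deriv (\<lambda>t. F (\<chi> k. if k = i then t else x $ k)) (x $ i)"

text \<open>The log-canonical Poisson bracket (the unique biderivation extending the
  generator brackets), evaluated at a point.\<close>
definition pbr :: "(real^8 \<Rightarrow> real) \<Rightarrow> (real^8 \<Rightarrow> real) \<Rightarrow> real^8 \<Rightarrow> real" where
  "pbr F G x = (\<Sum>i\<in>UNIV. \<Sum>j\<in>UNIV. omega i j * x $ i * x $ j * pd i F x * pd j G x)"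

definition casimir :: "(real^8 \<Rightarrow> real) \<Rightarrow> bool" where
  "casimir F \<longleftrightarrow> laurent F \<and> (\<forall>G. laurent G \<longrightarrow> (\<forall>x. torus x \<longrightarrow> pbr F G x = 0))"

definition ham :: "(real^8 \<Rightarrow> real) \<Rightarrow> real^8 \<Rightarrow> real^8" where
  "ham F x = (\<chi> i. pbr (\<lambda>y. y $ i) F x)"

text \<open>Dimension of the symplectic leaf through x: dimension of the span of the
  Hamiltonian vectors at x.\<close>
definition leaf_dim :: "real^8 \<Rightarrow> nat" where
  "leaf_dim x = dim {ham F x | F. laurent F}"

end

theory Submission
  imports Defs
begin
lemma exhaust_8:
  fixes x :: 8
  shows "x = 0 \<or> x = 1 \<or> x = 2 \<or> x = 3 \<or> x = 4 \<or> x = 5 \<or> x = 6 \<or> x = 7"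
proof (induct x)
  case (of_int z)
  then have "z = 0 \<or> z = 1 \<or> z = 2 \<or> z = 3 \<or> z = 4 \<or> z = 5 \<or> z = 6 \<or> z = 7" by fastforce
  then show ?case by auto
qed
lemma UNIV_8: "(UNIV::8 set) = {0,1,2,3,4,5,6,7}"
  using exhaust_8 by auto
lemma sum_8: "sum f (UNIV::8 set) = f 0 + f 1 + f 2 + f 3 + f 4 + f 5 + f 6 + f 7"
  unfolding UNIV_8 by (simp add: add.assoc)
lemma prod_8: "prod f (UNIV::8 set) = f 0 * f 1 * f 2 * f 3 * f 4 * f 5 * f 6 * f 7"
  unfolding UNIV_8 by (simp add: mult.assoc)

lemma core:
  fixes y :: "8 \<Rightarrow> real"
  assumes "y 4 = 0" "y 6 = 0" "\<And>i. (\<Sum>l\<in>UNIV. omega i l * y l) = 0"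
  shows "y l = 0"
proof -
  have e: "\<And>i. omega i 0 * y 0 + omega i 1 * y 1 + omega i 2 * y 2 + omega i 3 * y 3
     + omega i 5 * y 5 + omega i 7 * y 7 = 0"
    using assms(3) unfolding sum_8 using assms(1,2) by simp
  have "y 0 = 0 \<and> y 1 = 0 \<and> y 2 = 0 \<and> y 3 = 0 \<and> y 5 = 0 \<and> y 7 = 0"
    using e[of 0] e[of 1] e[of 2] e[of 3] e[of 5] e[of 6]
    by (simp add: omega_def wup_def)
  then show ?thesis using assms(1,2) exhaust_8[of l] by (elim disjE) simp_all
qed

lemma om34: "omega i 4 = - omega i 3"
  using exhaust_8[of i] by (elim disjE) (simp_all add: omega_def wup_def)
lemma om67: "omega i 6 = - omega i 7"
  using exhaust_8[of i] by (elim disjE) (simp_all add: omega_def wup_def)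
lemma om34': "omega 4 i = - omega 3 i"
  using exhaust_8[of i] by (elim disjE) (simp_all add: omega_def wup_def)
lemma om67': "omega 6 i = - omega 7 i"
  using exhaust_8[of i] by (elim disjE) (simp_all add: omega_def wup_def)

lemma coord_deriv:
  "((\<lambda>t. (\<chi> k. if k = i then t else x $ k) $ j) has_field_derivative (if j = i then 1 else 0)) (at s)"
  by (cases "j = i") (auto intro!: derivative_eq_intros)

lemma pd_coord: "pd i (\<lambda>y. y $ j) x = (if j = i then 1 else 0)"
  unfolding pd_def by (rule DERIV_imp_deriv[OF coord_deriv])

lemma pd_prod: "pd i (\<lambda>y. y $ j * y $ k) x
   = (if j = i then 1 else 0) * x $ k + x $ j * (if k = i then 1 else 0)"
proof -
  have "pd i (\<lambda>y. y $ j * y $ k) x = (if j = i then 1 else 0) * (\<chi> l. if l = i then x$i else x $ l) $ k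
        + (if k = i then 1 else 0) * (\<chi> l. if l = i then x$i else x $ l) $ j"
    unfolding pd_def by (rule DERIV_imp_deriv[OF DERIV_mult[OF coord_deriv coord_deriv]])
  then show ?thesis by auto
qed

lemma laurent_coord: "laurent (\<lambda>y. y $ j)"
  unfolding laurent_def
proof (intro exI conjI allI impI)
  show "finite {axis j (1::int)}" by simp
  fix x :: "real^8"
  have "lmono (axis j 1) x = (\<Prod>i\<in>UNIV. if i = j then x $ i else 1)"
    unfolding lmono_def axis_def by (intro prod.cong) auto
  also have "\<dots> = x $ j" by (simp add: prod.delta)
  finally show "x $ j = (\<Sum>m\<in>{axis j 1}. (\<lambda>_. 1) m * lmono m x)" by simp
qed

lemma laurent_prod: "j \<noteq> k \<Longrightarrow> laurent (\<lambda>y. y $ j * y $ k)"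
  unfolding laurent_def
proof (intro exI conjI allI impI)
  assume jk: "j \<noteq> k"
  show "finite {axis j (1::int) + axis k 1}" by simp
  fix x :: "real^8"
  have "lmono (axis j 1 + axis k 1) x = (\<Prod>i\<in>UNIV. (if i = j then x $ i else 1) * (if i = k then x $ i else 1))"
    unfolding lmono_def axis_def using jk by (intro prod.cong) auto
  also have "\<dots> = x $ j * x $ k" by (simp add: prod.distrib prod.delta)
  finally show "x $ j * x $ k = (\<Sum>m\<in>{axis j 1 + axis k 1}. (\<lambda>_. 1) m * lmono m x)" by simp
qed

lemma casimir_prod:
  assumes jk: "j \<noteq> k" and om: "\<And>l. omega k l = - omega j l"
  shows "casimir (\<lambda>y. y $ j * y $ k)"
  unfolding casimir_def
proof (intro conjI allI impI)
  show "laurent (\<lambda>y. y $ j * y $ k)" using laurent_prod[OF jk] .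
  fix G :: "real^8 \<Rightarrow> real" and x :: "real^8"
  have inner: "(\<Sum>a\<in>UNIV. omega a b * x $ a * x $ b * pd a (\<lambda>y. y $ j * y $ k) x * pd b G x) = 0" for b
  proof -
    have s: "omega a b * x $ a * x $ b * pd a (\<lambda>y. y $ j * y $ k) x * pd b G x
      = (if a = j then omega j b * x$j * x$b * x$k * pd b G x else 0)
      + (if a = k then omega k b * x$k * x$b * x$j * pd b G x else 0)" for a
      by (auto simp: pd_prod)
    have "(\<Sum>a\<in>UNIV. omega a b * x $ a * x $ b * pd a (\<lambda>y. y $ j * y $ k) x * pd b G x)
      = omega j b * x$j * x$b * x$k * pd b G x + omega k b * x$k * x$b * x$j * pd b G x"
      unfolding s sum.distrib by simp
    also have "\<dots> = 0" using om[of b] by (simp add: algebra_simps)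
    finally show ?thesis .
  qed
  have "pbr (\<lambda>y. y $ j * y $ k) G x = (\<Sum>b\<in>UNIV. \<Sum>a\<in>UNIV. omega a b * x $ a * x $ b * pd a (\<lambda>y. y $ j * y $ k) x * pd b G x)"
    unfolding pbr_def by (rule sum.swap)
  also have "\<dots> = 0" using inner by simp
  finally show "pbr (\<lambda>y. y $ j * y $ k) G x = 0" .
qed

definition hc :: "real^8 \<Rightarrow> 8 \<Rightarrow> real^8" where
  "hc x j = (\<chi> i. omega i j * x $ i * x $ j)"

lemma ham_eq: "ham F x = (\<Sum>j\<in>UNIV. pd j F x *\<^sub>R hc x j)"
proof -
  have "ham F x $ i = (\<Sum>j\<in>UNIV. pd j F x *\<^sub>R hc x j) $ i" for i
  proof -
    have s: "(\<Sum>b\<in>UNIV. omega a b * x $ a * x $ b * pd a (\<lambda>y. y $ i) x * pd b F x)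
      = (if a = i then (\<Sum>b\<in>UNIV. omega i b * x $ i * x $ b * pd b F x) else 0)" for a
      by (simp add: pd_coord)
    have "ham F x $ i = (\<Sum>a\<in>UNIV. \<Sum>b\<in>UNIV. omega a b * x $ a * x $ b * pd a (\<lambda>y. y $ i) x * pd b F x)"
      unfolding ham_def pbr_def by simp
    also have "\<dots> = (\<Sum>b\<in>UNIV. omega i b * x $ i * x $ b * pd b F x)"
      unfolding s by simp
    also have "\<dots> = (\<Sum>j\<in>UNIV. pd j F x *\<^sub>R hc x j) $ i"
      unfolding sum_component hc_def by (simp add: algebra_simps)
    finally show ?thesis .
  qed
  then show ?thesis by (simp add: vec_eq_iff)
qed

lemma ham_coord: "ham (\<lambda>y. y $ j) x = hc x j"
proof -
  have "(\<Sum>l\<in>UNIV. pd l (\<lambda>y. y $ j) x *\<^sub>R hc x l) = (\<Sum>l\<in>UNIV. if l = j then hc x j else 0)"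
    by (intro sum.cong) (auto simp: pd_coord)
  then show ?thesis unfolding ham_eq by simp
qed

lemma hc4: "x $ 3 \<noteq> 0 \<Longrightarrow> hc x 4 = (- (x $ 4 / x $ 3)) *\<^sub>R hc x 3"
  by (simp add: vec_eq_iff hc_def om34)
lemma hc6: "x $ 7 \<noteq> 0 \<Longrightarrow> hc x 6 = (- (x $ 6 / x $ 7)) *\<^sub>R hc x 7"
  by (simp add: vec_eq_iff hc_def om67)

abbreviation JJ :: "8 set" where "JJ \<equiv> {0,1,2,3,5,7}"

lemma hc_comp: "hc x j $ i = omega i j * x $ i * x $ j"
  by (simp add: hc_def)

lemma inj_hc: assumes t: "torus x" shows "inj_on (hc x) JJ"
proof (rule inj_onI, rule ccontr)
  fix j k assume j: "j \<in> JJ" and k: "k \<in> JJ" and e: "hc x j = hc x k" and ne: "j \<noteq> k"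
  define y where "y l = (if l = j then x $ j else 0) - (if l = k then x $ k else 0)" for l
  have xn: "x $ i \<noteq> 0" for i using t by (simp add: torus_def)
  have "y l = 0" for l
  proof (rule core)
    show "y 4 = 0" "y 6 = 0" using j k by (auto simp: y_def)
    fix i
    have "(\<Sum>l\<in>UNIV. omega i l * y l) = omega i j * x $ j - omega i k * x $ k"
      by (simp add: y_def right_diff_distrib sum_subtractf if_distrib[of "\<lambda>v. omega i _ * v"] cong: if_cong)
    also have "\<dots> = 0"
    proof -
      have "x $ i * (omega i j * x $ j - omega i k * x $ k) = 0"
        using arg_cong[OF e, of "\<lambda>v. v $ i"] by (simp add: hc_comp algebra_simps)
      then show ?thesis using xn[of i] by simp
    qed
    finally show "(\<Sum>l\<in>UNIV. omega i l * y l) = 0" .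
  qed
  from this[of j] ne xn[of j] show False by (simp add: y_def)
qed

lemma indep_hc: assumes t: "torus x" shows "independent (hc x ` JJ)"
proof (rule real_vector.independent_if_scalars_zero)
  show "finite (hc x ` JJ)" by simp
  fix f v assume s0: "(\<Sum>v\<in>hc x ` JJ. f v *\<^sub>R v) = 0" and v: "v \<in> hc x ` JJ"
  have xn: "x $ i \<noteq> 0" for i using t by (simp add: torus_def)
  have s1: "(\<Sum>j\<in>JJ. f (hc x j) *\<^sub>R hc x j) = 0"
  proof -
    have "(\<Sum>v\<in>hc x ` JJ. f v *\<^sub>R v) = (\<Sum>j\<in>JJ. f (hc x j) *\<^sub>R hc x j)"
      by (simp only: sum.reindex[OF inj_hc[OF t]] comp_def)
    then show ?thesis using s0 by simp
  qed
  define y where "y l = (if l \<in> JJ then f (hc x l) * x $ l else 0)" for l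
  have "y l = 0" for l
  proof (rule core)
    show "y 4 = 0" "y 6 = 0" by (auto simp: y_def)
    fix i
    have "x $ i * (\<Sum>l\<in>UNIV. omega i l * y l) = (\<Sum>j\<in>JJ. f (hc x j) *\<^sub>R hc x j) $ i"
      by (simp add: sum_8 y_def hc_comp algebra_simps)
    then show "(\<Sum>l\<in>UNIV. omega i l * y l) = 0" using s1 xn[of i] by simp
  qed
  note yz = this
  from v obtain j where j: "j \<in> JJ" "v = hc x j" by blast
  have "f v * x $ j = 0" using yz[of j] j unfolding y_def by (simp only: if_True)
  then show "f v = 0" using xn[of j] by simp
qed

lemma leaf6: assumes t: "torus x" shows "leaf_dim x = 6"
proof -
  have xn: "x $ i \<noteq> 0" for i using t by (simp add: torus_def)
  let ?S = "{ham F x | F. laurent F}"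
  let ?B = "hc x ` JJ"
  have cardB: "card ?B = 6"
    using card_image[OF inj_hc[OF t]] by simp
  have hc_span: "hc x l \<in> span ?B" for l
  proof -
    have b: "hc x j \<in> span ?B" if "j \<in> JJ" for j using that by (intro span_base) auto
    show ?thesis
      using exhaust_8[of l]
    proof (elim disjE)
      have b3: "hc x 3 \<in> span ?B" by (rule b) simp
      assume l: "l = 4" show ?thesis
        unfolding l hc4[OF xn[of 3]] by (rule span_scale[OF b3])
    next
      have b7: "hc x 7 \<in> span ?B" by (rule b) simp
      assume l: "l = 6" show ?thesis
        unfolding l hc6[OF xn[of 7]] by (rule span_scale[OF b7])
    qed (auto intro!: span_base)
  qed
  have sub: "?S \<subseteq> span ?B"
  proof
    fix v assume "v \<in> ?S"
    then obtain F where "v = ham F x" by blast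
    then show "v \<in> span ?B"
      by (simp only: ham_eq) (intro span_sum span_scale hc_span)
  qed
  have le: "dim ?S \<le> 6"
    using dim_le_card[OF sub] cardB by simp
  have "?B \<subseteq> ?S"
  proof
    fix v assume "v \<in> ?B"
    then obtain j where "v = hc x j" by blast
    then have "v = ham (\<lambda>y. y $ j) x" by (simp add: ham_coord)
    then show "v \<in> ?S" using laurent_coord by blast
  qed
  from independent_card_le_dim[OF this indep_hc[OF t]] cardB have "6 \<le> dim ?S" by simp
  with le show ?thesis unfolding leaf_dim_def by simp
qed

theorem mainTheorem5:
  shows "casimir (\<lambda>x. x $ 3 * x $ 4) \<and> casimir (\<lambda>x. x $ 7 * x $ 6)
         \<and> (\<forall>x. torus x \<longrightarrow> leaf_dim x = 6)"
proof (intro conjI allI impI)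
  show "casimir (\<lambda>x. x $ 3 * x $ 4)" by (rule casimir_prod) (simp_all add: om34')
  show "casimir (\<lambda>x. x $ 7 * x $ 6)" by (rule casimir_prod) (simp_all add: om67')
  fix x :: "real^8" assume "torus x" then show "leaf_dim x = 6" by (rule leaf6)
qed
end
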